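(* In the setting described in the context, for every $n\ge1$, every $k\ge0$ and every $x\in\mathbb{R}$, \[ \int_{\mathbb{R}}K_n(x,y)\,y^k\,K_n(y,x)\,d\mu(y)=\sum_{\ell=0}^{n-1}\sum_{\ell'=0}^{n-1}q_\ell(x)\,[J^k]_{\ell,\ell'}\,p_{\ell'}(x), \] i.e. the left-hand side equals $\langle\Pi_n\vec q(x),J^k\Pi_n\vec p(x)\rangle_{\ell^2}$, where $\vec p(x)=(p_0(x),p_1(x),\dots)^t$, $\vec q(x)=(q_0(x),q_1(x),\dots)^t$ and $\Pi_n$ replaces all coordinates with index $\ge n$ by $0$.
   Context: Let $r\ge1$ and let $\mu_1,\dots,\mu_r$ be positive Borel measures on $\mathbb{R}$ with all moments finite, forming a perfect system: for every $\vec n\in\mathbb{N}_0^r$ there is a monic polynomial $P_{\vec n}$ of degree $|\vec n|=n_1+\dots+n_r$ with $\int x^kP_{\vec n}\,d\mu_j=0$ for $0\le k\le n_j-1$, $1\le j\le r$. Type I polynomials $A_{\vec n}=(A_{\vec n,1},\dots,A_{\vec n,r})$: $\deg A_{\vec n,j}\le n_j-1$, $\sum_j\int x^kA_{\vec n,j}\,d\mu_j=0$ for $0\le k\le|\vec n|-2$, and $=1$ for $k=|\vec n|-1$. Let $\mu$ be a positive measure with $\mu_j\ll\mu$, $w_j=d\mu_j/d\mu$, $Q_{\vec n}=\sum_jA_{\vec n,j}w_j$. Fix a path $(\vec n_\ell)_{\ell\ge0}$ with $|\vec n_\ell|=\ell$, $\vec n_{\ell+1}=\vec n_\ell+\vec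 e_{i_\ell}$ ($\vec e_j$ the $j$-th unit vector), and set $p_\ell=P_{\vec n_\ell}$, $q_\ell=Q_{\vec n_{\ell+1}}$, so that $\int p_\ell q_{\ell'}\,d\mu=\delta_{\ell,\ell'}$. The Christoffel--Darboux kernel is $K_n(x,y)=\sum_{j=0}^{n-1}p_j(x)q_j(y)$. The matrix $J=[J_{\ell,k}]_{\ell,k\ge0}$ is defined by $xp_\ell=\sum_{k=0}^{\ell+1}J_{\ell,k}p_k$, $J_{\ell,k}=0$ for $k>\ell+1$ (lower Hessenberg, so its powers are well defined). *)

theory Defs
  imports "HOL-Probability.Probability" "HOL-Computational_Algebra.Polynomial"
begin

text \<open>Multi-indices are functions nat => nat; only the components 1..r matter.\<close>
definition mi_norm :: "nat \<Rightarrow> (nat \<Rightarrow> nat) \<Rightarrow> nat" where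
  "mi_norm r nv = (\<Sum>j=1..r. nv j)"

definition all_moments_finite :: "real measure \<Rightarrow> bool" where
  "all_moments_finite M \<longleftrightarrow> (\<forall>k::nat. integrable M (\<lambda>x. x ^ k))"

definition is_typeII :: "nat \<Rightarrow> (nat \<Rightarrow> real measure) \<Rightarrow> (nat \<Rightarrow> nat) \<Rightarrow> real poly \<Rightarrow> bool" where
  "is_typeII r \<mu>s nv P \<longleftrightarrow>
     lead_coeff P = 1 \<and> degree P = mi_norm r nv \<and>
     (\<forall>j\<in>{1..r}. \<forall>k<nv j. (\<integral>x. x ^ k * poly P x \<partial>(\<mu>s j)) = 0)"

definition perfect_system :: "nat \<Rightarrow> (nat \<Rightarrow> real measure) \<Rightarrow> bool" where
  "perfect_system r \<mu>s \<longleftrightarrow>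
     (\<forall>nv. (\<forall>j. j \<notin> {1..r} \<longrightarrow> nv j = 0) \<longrightarrow> (\<exists>P. is_typeII r \<mu>s nv P))"

text \<open>Type I multiple orthogonal polynomials (A_1,...,A_r) for the index nv (|nv| >= 1).
  deg A_j <= nv_j - 1 is read as A_j = 0 when nv_j = 0.\<close>
definition is_typeI :: "nat \<Rightarrow> (nat \<Rightarrow> real measure) \<Rightarrow> (nat \<Rightarrow> nat) \<Rightarrow> (nat \<Rightarrow> real poly) \<Rightarrow> bool" where
  "is_typeI r \<mu>s nv A \<longleftrightarrow>
     (\<forall>j\<in>{1..r}. (nv j = 0 \<longrightarrow> A j = 0) \<and> degree (A j) \<le> nv j - 1) \<and>
     (\<forall>k. k + 2 \<le> mi_norm r nv \<longrightarrow>
        (\<Sum>j=1..r. (\<integral>x. x ^ k * poly (A j) x \<partial>(\<mu>s j))) = 0) \<and>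
     (\<Sum>j=1..r. (\<integral>x. x ^ (mi_norm r nv - 1) * poly (A j) x \<partial>(\<mu>s j))) = 1"

text \<open>The path: n_0 = 0, n_(l+1) = n_l + e_(i l); component j of n_l counts the steps in direction j.\<close>
definition path_vec :: "(nat \<Rightarrow> nat) \<Rightarrow> nat \<Rightarrow> (nat \<Rightarrow> nat)" where
  "path_vec i l = (\<lambda>j. card {m. m < l \<and> i m = j})"

definition pseq :: "((nat \<Rightarrow> nat) \<Rightarrow> real poly) \<Rightarrow> (nat \<Rightarrow> nat) \<Rightarrow> nat \<Rightarrow> real \<Rightarrow> real" where
  "pseq P i l x = poly (P (path_vec i l)) x"

text \<open>q_l = Q_(n_(l+1)) = sum_j A_(n_(l+1),j) w_j.\<close>
definition qseq :: "nat \<Rightarrow> ((nat \<Rightarrow> nat) \<Rightarrow> nat \<Rightarrow> real poly) \<Rightarrow> (nat \<Rightarrow> real \<Rightarrow> real)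
    \<Rightarrow> (nat \<Rightarrow> nat) \<Rightarrow> nat \<Rightarrow> real \<Rightarrow> real" where
  "qseq r A w i l y = (\<Sum>j=1..r. poly (A (path_vec i (Suc l)) j) y * w j y)"

definition CD_kernel :: "nat \<Rightarrow> ((nat \<Rightarrow> nat) \<Rightarrow> real poly) \<Rightarrow> ((nat \<Rightarrow> nat) \<Rightarrow> nat \<Rightarrow> real poly)
    \<Rightarrow> (nat \<Rightarrow> real \<Rightarrow> real) \<Rightarrow> (nat \<Rightarrow> nat) \<Rightarrow> nat \<Rightarrow> real \<Rightarrow> real \<Rightarrow> real" where
  "CD_kernel r P A w i n x y = (\<Sum>j<n. pseq P i j x * qseq r A w i j y)"

text \<open>Powers of a lower Hessenberg matrix J (J a c = 0 for c > a+1): the product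
  (J * J^k)_(a,b) = sum_c J_(a,c) (J^k)_(c,b) only involves c <= a+1.\<close>
fun hess_pow :: "(nat \<Rightarrow> nat \<Rightarrow> real) \<Rightarrow> nat \<Rightarrow> nat \<Rightarrow> nat \<Rightarrow> real" where
  "hess_pow J 0 a b = (if a = b then 1 else 0)"
| "hess_pow J (Suc k) a b = (\<Sum>c\<le>Suc a. J a c * hess_pow J k c b)"

end

theory Submission
  imports Defs
begin

lemma integrable_poly_mom:
  assumes "all_moments_finite M"
  shows "integrable M (\<lambda>x. poly f x)"
proof -
  have "(\<lambda>x. poly f x) = (\<lambda>x. \<Sum>i\<le>degree f. coeff f i * x ^ i)"
    by (simp add: poly_altdef)
  moreover have "integrable M (\<lambda>x. \<Sum>i\<le>degree f. coeff f i * x ^ i)"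
    proof (rule Bochner_Integration.integrable_sum)
    fix i show "integrable M (\<lambda>x. coeff f i * x ^ i)"
      using assms unfolding all_moments_finite_def by simp
  qed
  ultimately show ?thesis by simp
qed

lemma density_poly:
  assumes "sets \<mu> = sets borel" "g \<in> borel_measurable borel" "\<forall>y. g y \<ge> 0"
    and "M = density \<mu> (\<lambda>y. ennreal (g y))" "all_moments_finite M"
  shows "integrable \<mu> (\<lambda>y. g y * poly f y) \<and> (\<integral>y. g y * poly f y \<partial>\<mu>) = (\<integral>y. poly f y \<partial>M)"
proof -
  have gm: "g \<in> borel_measurable \<mu>" using assms(1,2) measurable_cong_sets by blast
  have "poly f \<in> borel_measurable borel"
    by (intro borel_measurable_continuous_onI continuous_intros)
  then have fm: "(\<lambda>y. poly f y) \<in> borel_measurable \<mu>"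
    using measurable_cong_sets[OF assms(1), of borel borel] by metis
  have "integrable M (\<lambda>x. poly f x)" using integrable_poly_mom assms(5) by blast
  then have "integrable \<mu> (\<lambda>y. g y *\<^sub>R poly f y)"
    using integrable_density[OF fm gm] assms(3,4) by auto
  moreover have "(\<integral>y. poly f y \<partial>M) = (\<integral>y. g y *\<^sub>R poly f y \<partial>\<mu>)"
    using integral_density[OF fm gm] assms(3,4) by auto
  ultimately show ?thesis by simp
qed

lemma pv_out: "\<forall>l. i l \<in> {1..r} \<Longrightarrow> j \<notin> {1..r} \<Longrightarrow> path_vec i l j = 0"
  unfolding path_vec_def by (metis (mono_tags, lifting) Collect_empty_eq card.empty)

lemma pv_Suc: "path_vec i (Suc l) j = path_vec i l j + (if i l = j then 1 else 0)"
proof -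
  have "{m. m < Suc l \<and> i m = j} = {m. m < l \<and> i m = j} \<union> (if i l = j then {l} else {})"
    by (auto simp: less_Suc_eq)
  then show ?thesis unfolding path_vec_def
    by (cases "i l = j") (simp_all add: card_insert_if)
qed

lemma pv_norm: "\<forall>l. i l \<in> {1..r} \<Longrightarrow> mi_norm r (path_vec i l) = l"
proof (induction l)
  case 0 then show ?case by (simp add: mi_norm_def path_vec_def)
next
  case (Suc l)
  have "mi_norm r (path_vec i (Suc l)) = mi_norm r (path_vec i l) + (\<Sum>j=1..r. if i l = j then 1 else 0)"
    unfolding mi_norm_def pv_Suc sum.distrib by simp
  also have "(\<Sum>j=1..r. if i l = j then 1 else (0::nat)) = 1"
    using Suc.prems sum.delta'[of "{1..r}" "i l" "\<lambda>_. 1::nat"] by simp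
  finally show ?case using Suc by simp
qed

lemma pv_mono: "m \<le> l \<Longrightarrow> path_vec i m j \<le> path_vec i l j"
  unfolding path_vec_def by (rule card_mono) auto

lemma poly_expand_int:
  fixes M :: "real measure" and g :: "real \<Rightarrow> real" and f :: "real poly"
  assumes "\<And>t. integrable M (\<lambda>y. y ^ t * g y)"
  shows "(\<integral>y. poly f y * g y \<partial>M) = (\<Sum>t\<le>degree f. coeff f t * (\<integral>y. y ^ t * g y \<partial>M))"
proof -
  have "(\<lambda>y. poly f y * g y) = (\<lambda>y. \<Sum>t\<le>degree f. coeff f t * (y ^ t * g y))"
    by (rule ext, subst poly_altdef) (simp add: sum_distrib_left sum_distrib_right mult_ac)
  then have "(\<integral>y. poly f y * g y \<partial>M) = (\<integral>y. (\<Sum>t\<le>degree f. coeff f t * (y ^ t * g y)) \<partial>M)"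
    by simp
  also have "\<dots> = (\<Sum>t\<le>degree f. (\<integral>y. coeff f t * (y ^ t * g y) \<partial>M))"
    by (rule Bochner_Integration.integral_sum) (use assms in simp)
  also have "\<dots> = (\<Sum>t\<le>degree f. coeff f t * (\<integral>y. y ^ t * g y \<partial>M))"
    by simp
  finally show ?thesis .
qed

lemma int_pp:
  assumes "all_moments_finite M"
  shows "integrable M (\<lambda>y. poly f y * poly g y)" "integrable M (\<lambda>y. y ^ t * poly g y)"
proof -
  show "integrable M (\<lambda>y. poly f y * poly g y)"
    using integrable_poly_mom[OF assms, of "f * g"] by simp
  show "integrable M (\<lambda>y. y ^ t * poly g y)"
    using integrable_poly_mom[OF assms, of "monom 1 t * g"] by (simp add: poly_monom)
qed

theorem lemma1:
  fixes r :: nat and \<mu>s :: "nat \<Rightarrow> real measure" and \<mu> :: "real measure"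
    and w :: "nat \<Rightarrow> real \<Rightarrow> real"
    and P :: "(nat \<Rightarrow> nat) \<Rightarrow> real poly"
    and A :: "(nat \<Rightarrow> nat) \<Rightarrow> nat \<Rightarrow> real poly"
    and i :: "nat \<Rightarrow> nat" and J :: "nat \<Rightarrow> nat \<Rightarrow> real"
    and n k :: nat and x :: real
  assumes "r \<ge> 1"
    and "\<forall>j\<in>{1..r}. sets (\<mu>s j) = sets borel"
    and "\<forall>j\<in>{1..r}. all_moments_finite (\<mu>s j)"
    and "perfect_system r \<mu>s"
    and "\<forall>nv. (\<forall>j. j \<notin> {1..r} \<longrightarrow> nv j = 0) \<longrightarrow> is_typeII r \<mu>s nv (P nv)"
    and "\<forall>nv. (\<forall>j. j \<notin> {1..r} \<longrightarrow> nv j = 0) \<and> mi_norm r nv \<ge> 1 \<longrightarrow> is_typeI r \<mu>s nv (A nv)"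
    and "sets \<mu> = sets borel"
    and "\<forall>j\<in>{1..r}. absolutely_continuous \<mu> (\<mu>s j)"
    and "\<forall>j\<in>{1..r}. w j \<in> borel_measurable borel \<and> (\<forall>y. w j y \<ge> 0) \<and>
           \<mu>s j = density \<mu> (\<lambda>y. ennreal (w j y))"
    and "\<forall>l. i l \<in> {1..r}"
    and "\<forall>l. [:0, 1:] * P (path_vec i l) = (\<Sum>m\<le>Suc l. smult (J l m) (P (path_vec i m)))"
    and "\<forall>l m. m > Suc l \<longrightarrow> J l m = 0"
    and "n \<ge> 1"
  shows "(\<integral>y. CD_kernel r P A w i n x y * y ^ k * CD_kernel r P A w i n y x \<partial>\<mu>)
         = (\<Sum>l<n. \<Sum>l'<n. qseq r A w i l x * hess_pow J k l l' * pseq P i l' x)"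
proof -
  define pp where "pp l = P (path_vec i l)" for l
  define AA where "AA l j = A (path_vec i (Suc l)) j" for l j
  note as = assms
  have pvout: "\<forall>j. j \<notin> {1..r} \<longrightarrow> path_vec i l j = 0" for l
    using pv_out[OF as(10)] by blast
  have tII: "is_typeII r \<mu>s (path_vec i l) (pp l)" for l
    using as(5) pvout unfolding pp_def by blast
  have tI: "is_typeI r \<mu>s (path_vec i (Suc l)) (A (path_vec i (Suc l)))" for l
    using as(6) pvout pv_norm[OF as(10)] by simp
  have normv: "mi_norm r (path_vec i l) = l" for l using pv_norm[OF as(10)] .
  have dens: "integrable \<mu> (\<lambda>y. w j y * poly f y) \<and> (\<integral>y. w j y * poly f y \<partial>\<mu>) = (\<integral>y. poly f y \<partial>(\<mu>s j))"
    if "j \<in> {1..r}" for j f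
    using density_poly[OF as(7), of "w j" "\<mu>s j" f] as(9) as(3) that by blast
  have mom: "all_moments_finite (\<mu>s j)" if "j \<in> {1..r}" for j using as(3) that by blast
  have bi: "(\<Sum>j=1..r. \<integral>y. poly (AA m j) y * poly (pp l) y \<partial>\<mu>s j) = (if l = m then 1 else 0)" for l m
  proof (cases "m < l")
    case True
    have z: "(\<integral>y. poly (AA m j) y * poly (pp l) y \<partial>\<mu>s j) = 0" if j: "j \<in> {1..r}" for j
    proof (cases "path_vec i (Suc m) j = 0")
      case True
      then have "AA m j = 0" using tI[of m] j unfolding is_typeI_def AA_def by blast
      then show ?thesis by simp
    next
      case False
      have dg: "degree (AA m j) \<le> path_vec i (Suc m) j - 1"
        using tI[of m] j unfolding is_typeI_def AA_def by blast
      have mono: "path_vec i (Suc m) j \<le> path_vec i l j" using pv_mono True by simp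
      have "(\<integral>y. poly (AA m j) y * poly (pp l) y \<partial>\<mu>s j)
         = (\<Sum>t\<le>degree (AA m j). coeff (AA m j) t * (\<integral>y. y ^ t * poly (pp l) y \<partial>\<mu>s j))"
        by (rule poly_expand_int) (rule int_pp(2)[OF mom[OF j]])
      also have "\<dots> = 0"
      proof (rule sum.neutral, rule ballI)
        fix t assume "t \<in> {..degree (AA m j)}"
        then have "t < path_vec i l j" using dg mono False by auto
        then have "(\<integral>y. y ^ t * poly (pp l) y \<partial>\<mu>s j) = 0"
          using tII[of l] j unfolding is_typeII_def by blast
        then show "coeff (AA m j) t * (\<integral>y. y ^ t * poly (pp l) y \<partial>\<mu>s j) = 0" by simp
      qed
      finally show ?thesis .
    qed
    then show ?thesis using True by simp
  next
    case False
    have dl: "degree (pp l) = l" and lc: "lead_coeff (pp l) = 1"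
      using tII[of l] normv[of l] unfolding is_typeII_def by auto
    have I0: "(\<Sum>j=1..r. \<integral>y. y ^ t * poly (AA m j) y \<partial>\<mu>s j) = (if t = m then 1 else 0)"
      if "t \<le> m" for t
    proof (cases "t = m")
      case True then show ?thesis using tI[of m] normv[of "Suc m"] unfolding is_typeI_def AA_def by simp
    next
      case False
      then have "t + 2 \<le> mi_norm r (path_vec i (Suc m))" using that normv[of "Suc m"] by simp
      then show ?thesis using tI[of m] False unfolding is_typeI_def AA_def by simp
    qed
    have "(\<Sum>j=1..r. \<integral>y. poly (AA m j) y * poly (pp l) y \<partial>\<mu>s j)
        = (\<Sum>j=1..r. \<integral>y. poly (pp l) y * poly (AA m j) y \<partial>\<mu>s j)"
      by (simp add: mult.commute)
    also have "\<dots> = (\<Sum>j=1..r. \<Sum>t\<le>l. coeff (pp l) t * (\<integral>y. y ^ t * poly (AA m j) y \<partial>\<mu>s j))"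
    proof (rule sum.cong[OF refl])
      fix j assume j: "j \<in> {1..r}"
      show "(\<integral>y. poly (pp l) y * poly (AA m j) y \<partial>\<mu>s j) = (\<Sum>t\<le>l. coeff (pp l) t * (\<integral>y. y ^ t * poly (AA m j) y \<partial>\<mu>s j))"
        using poly_expand_int[OF int_pp(2)[OF mom[OF j]], of "pp l"] dl by simp
    qed
    also have "\<dots> = (\<Sum>t\<le>l. coeff (pp l) t * (\<Sum>j=1..r. \<integral>y. y ^ t * poly (AA m j) y \<partial>\<mu>s j))"
      by (subst sum.swap) (simp add: sum_distrib_left)
    also have "\<dots> = (\<Sum>t\<le>l. if t = m then coeff (pp l) t else 0)"
      by (rule sum.cong[OF refl]) (use False I0 in auto)
    also have "\<dots> = (if l = m then 1 else 0)"
      using False lc dl by auto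
    finally show ?thesis .
  qed
  have expand: "\<forall>a N. a + k \<le> N \<longrightarrow> y ^ k * poly (pp a) y = (\<Sum>b\<le>N. hess_pow J k a b * poly (pp b) y)" for y
  proof (induction k)
    case 0
    show ?case
    proof (intro allI impI)
      fix a N :: nat assume "a + 0 \<le> N"
      have "(\<Sum>b\<le>N. hess_pow J 0 a b * poly (pp b) y) = (\<Sum>b\<le>N. if a = b then poly (pp b) y else 0)"
        by (rule sum.cong) auto
      then show "y ^ 0 * poly (pp a) y = (\<Sum>b\<le>N. hess_pow J 0 a b * poly (pp b) y)"
        using \<open>a + 0 \<le> N\<close> by simp
    qed
  next
    case (Suc k)
    show ?case
    proof (intro allI impI)
      fix a N :: nat assume aN: "a + Suc k \<le> N"
      have rec: "y * poly (pp a) y = (\<Sum>c\<le>Suc a. J a c * poly (pp c) y)"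
        using arg_cong[OF spec[OF as(11), of a], of "\<lambda>p. poly p y"] unfolding pp_def
        by (simp add: poly_sum)
      have "y ^ Suc k * poly (pp a) y = y ^ k * (y * poly (pp a) y)" by simp
      also have "\<dots> = (\<Sum>c\<le>Suc a. J a c * (y ^ k * poly (pp c) y))"
        unfolding rec sum_distrib_left by (rule sum.cong[OF refl]) (simp add: mult_ac)
      also have "\<dots> = (\<Sum>c\<le>Suc a. J a c * (\<Sum>b\<le>N. hess_pow J k c b * poly (pp b) y))"
        by (rule sum.cong[OF refl]) (use Suc.IH aN in auto)
      also have "\<dots> = (\<Sum>b\<le>N. (\<Sum>c\<le>Suc a. J a c * hess_pow J k c b) * poly (pp b) y)"
        by (simp only: sum_distrib_left sum_distrib_right mult.assoc sum.swap[of _ "{..Suc a}"])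
      finally show "y ^ Suc k * poly (pp a) y = (\<Sum>b\<le>N. hess_pow J (Suc k) a b * poly (pp b) y)"
        by simp
    qed
  qed
  have G: "(\<Sum>j=1..r. \<integral>y. poly (AA l j) y * (y ^ k * poly (pp l') y) \<partial>\<mu>s j) = hess_pow J k l' l" for l l'
  proof -
    define N where "N = l + l' + k"
    have e: "(\<integral>y. poly (AA l j) y * (y ^ k * poly (pp l') y) \<partial>\<mu>s j)
       = (\<Sum>b\<le>N. hess_pow J k l' b * (\<integral>y. poly (AA l j) y * poly (pp b) y \<partial>\<mu>s j))"
      if j: "j \<in> {1..r}" for j
    proof -
      have "(\<lambda>y. poly (AA l j) y * (y ^ k * poly (pp l') y))
          = (\<lambda>y. \<Sum>b\<le>N. hess_pow J k l' b * (poly (AA l j) y * poly (pp b) y))"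
      proof (rule ext)
        fix y
        have "y ^ k * poly (pp l') y = (\<Sum>b\<le>N. hess_pow J k l' b * poly (pp b) y)"
          using expand[of y] unfolding N_def by simp
        then show "poly (AA l j) y * (y ^ k * poly (pp l') y)
          = (\<Sum>b\<le>N. hess_pow J k l' b * (poly (AA l j) y * poly (pp b) y))"
          by (simp add: sum_distrib_left mult.left_commute)
      qed
      then have "(\<integral>y. poly (AA l j) y * (y ^ k * poly (pp l') y) \<partial>\<mu>s j)
          = (\<integral>y. (\<Sum>b\<le>N. hess_pow J k l' b * (poly (AA l j) y * poly (pp b) y)) \<partial>\<mu>s j)"
        by simp
      also have "\<dots> = (\<Sum>b\<le>N. (\<integral>y. hess_pow J k l' b * (poly (AA l j) y * poly (pp b) y) \<partial>\<mu>s j))"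
        by (rule Bochner_Integration.integral_sum) (use int_pp(1)[OF mom[OF j]] in simp)
      also have "\<dots> = (\<Sum>b\<le>N. hess_pow J k l' b * (\<integral>y. poly (AA l j) y * poly (pp b) y \<partial>\<mu>s j))"
        by simp
      finally show ?thesis .
    qed
    have "(\<Sum>j=1..r. \<integral>y. poly (AA l j) y * (y ^ k * poly (pp l') y) \<partial>\<mu>s j)
       = (\<Sum>j=1..r. \<Sum>b\<le>N. hess_pow J k l' b * (\<integral>y. poly (AA l j) y * poly (pp b) y \<partial>\<mu>s j))"
      using e by simp
    also have "\<dots> = (\<Sum>b\<le>N. hess_pow J k l' b * (\<Sum>j=1..r. \<integral>y. poly (AA l j) y * poly (pp b) y \<partial>\<mu>s j))"
      by (subst sum.swap) (simp add: sum_distrib_left)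
    also have "\<dots> = (\<Sum>b\<le>N. if b = l then hess_pow J k l' b else 0)"
      unfolding bi by (rule sum.cong[OF refl]) simp
    also have "\<dots> = hess_pow J k l' l" unfolding N_def by simp
    finally show ?thesis .
  qed
  define c where "c l l' = pseq P i l x * qseq r A w i l' x" for l l'
  define g where "g l l' j y = w j y * (poly (AA l j) y * (y ^ k * poly (pp l') y))" for l l' j y
  have pw: "CD_kernel r P A w i n x y * y ^ k * CD_kernel r P A w i n y x
     = (\<Sum>l<n. \<Sum>l'<n. c l l' * (\<Sum>j=1..r. g l l' j y))" for y
  proof -
    have qy: "qseq r A w i l y = (\<Sum>j=1..r. w j y * poly (AA l j) y)" for l
      unfolding qseq_def AA_def by (simp add: mult_ac)
    have py: "pseq P i l y = poly (pp l) y" for l unfolding pseq_def pp_def by simp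
    have "CD_kernel r P A w i n x y * y ^ k * CD_kernel r P A w i n y x
      = (\<Sum>l<n. \<Sum>l'<n. c l l' * (qseq r A w i l y * (y ^ k * pseq P i l' y)))"
    proof -
      have "CD_kernel r P A w i n x y * y ^ k * CD_kernel r P A w i n y x
         = y ^ k * (CD_kernel r P A w i n x y * CD_kernel r P A w i n y x)" by simp
      also have "\<dots> = y ^ k * (\<Sum>l<n. \<Sum>l'<n. (pseq P i l x * qseq r A w i l y) * (pseq P i l' y * qseq r A w i l' x))"
        unfolding CD_kernel_def sum_product ..
      also have "\<dots> = (\<Sum>l<n. \<Sum>l'<n. c l l' * (qseq r A w i l y * (y ^ k * pseq P i l' y)))"
        unfolding sum_distrib_left c_def by (intro sum.cong refl) (simp add: mult_ac)
      finally show ?thesis .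
    qed
    also have "\<dots> = (\<Sum>l<n. \<Sum>l'<n. c l l' * (\<Sum>j=1..r. g l l' j y))"
      unfolding qy py g_def sum_distrib_right sum_distrib_left by (intro sum.cong refl) (simp add: mult_ac)
    finally show ?thesis .
  qed
  have gint: "integrable \<mu> (g l l' j) \<and> (\<integral>y. g l l' j y \<partial>\<mu>) = (\<integral>y. poly (AA l j) y * (y ^ k * poly (pp l') y) \<partial>\<mu>s j)"
    if "j \<in> {1..r}" for l l' j
    using dens[OF that, of "AA l j * (monom 1 k * pp l')"] unfolding g_def
    by (simp add: poly_monom)
  have "(\<integral>y. CD_kernel r P A w i n x y * y ^ k * CD_kernel r P A w i n y x \<partial>\<mu>)
     = (\<integral>y. (\<Sum>l<n. \<Sum>l'<n. c l l' * (\<Sum>j=1..r. g l l' j y)) \<partial>\<mu>)"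
    unfolding pw by simp
  also have "\<dots> = (\<Sum>l<n. \<Sum>l'<n. c l l' * (\<Sum>j=1..r. \<integral>y. g l l' j y \<partial>\<mu>))"
  proof -
    have gi: "integrable \<mu> (g l l' j)" if "j \<in> {1..r}" for l l' j using gint[OF that] by blast
    have intg: "integrable \<mu> (\<lambda>y. \<Sum>j=1..r. g l l' j y)" for l l'
      by (rule Bochner_Integration.integrable_sum) (use gi in auto)
    have e1: "(\<integral>y. (\<Sum>j=1..r. g l l' j y) \<partial>\<mu>) = (\<Sum>j=1..r. \<integral>y. g l l' j y \<partial>\<mu>)" for l l'
      by (rule Bochner_Integration.integral_sum) (use gi in auto)
    have e2: "(\<integral>y. (\<Sum>l'<n. c l l' * (\<Sum>j=1..r. g l l' j y)) \<partial>\<mu>)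
        = (\<Sum>l'<n. c l l' * (\<integral>y. (\<Sum>j=1..r. g l l' j y) \<partial>\<mu>))" for l
      by (subst Bochner_Integration.integral_sum) (use intg in auto)
    have intg2: "integrable \<mu> (\<lambda>y. \<Sum>l'<n. c l l' * (\<Sum>j=1..r. g l l' j y))" for l
      by (rule Bochner_Integration.integrable_sum) (use intg in auto)
    have "(\<integral>y. (\<Sum>l<n. \<Sum>l'<n. c l l' * (\<Sum>j=1..r. g l l' j y)) \<partial>\<mu>)
       = (\<Sum>l<n. \<integral>y. (\<Sum>l'<n. c l l' * (\<Sum>j=1..r. g l l' j y)) \<partial>\<mu>)"
      by (rule Bochner_Integration.integral_sum) (use intg2 in auto)
    then show ?thesis by (simp only: e1 e2)
  qed
  also have "\<dots> = (\<Sum>l<n. \<Sum>l'<n. c l l' * hess_pow J k l' l)"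
  proof -
    have "(\<Sum>j=1..r. \<integral>y. g l l' j y \<partial>\<mu>) = hess_pow J k l' l" for l l'
    proof -
      have "(\<Sum>j=1..r. \<integral>y. g l l' j y \<partial>\<mu>)
         = (\<Sum>j=1..r. \<integral>y. poly (AA l j) y * (y ^ k * poly (pp l') y) \<partial>\<mu>s j)"
        by (rule sum.cong[OF refl]) (use gint in blast)
      then show ?thesis using G by simp
    qed
    then show ?thesis by (simp only:)
  qed
  also have "\<dots> = (\<Sum>l<n. \<Sum>l'<n. qseq r A w i l x * hess_pow J k l l' * pseq P i l' x)"
    unfolding c_def by (subst sum.swap) (simp add: mult_ac)
  finally show ?thesis .
qed

end
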